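(* Let $\mathcal{A}$ be an algebra in a functional language $\mathcal{L}$, $\mathcal{B}$ an $\mathcal{A}$-algebra, and $\Lambda$ a direct system of formulas in $\mathcal{L}_{\mathcal{A}}$ such that every formula of $\Lambda$ is realizable in $\mathcal{B}$. Then the limit algebra $\mathcal{B}_\Lambda=L(\Lambda)$ is an $\mathcal{A}$-algebra, i.e. $\mathcal{B}_\Lambda\models\mathrm{Diag}(\mathcal{A})$.
   Context: Functional language: operation symbols $F$ (arity $n_F$) and constants only. $\mathcal{L}_{\mathcal{A}}=\mathcal{L}\cup\{c_a:a\in A\}$. $\mathrm{Diag}(\mathcal{A})$ is the set of atomic $\mathcal{L}_{\mathcal{A}}$-sentences and negations of atomic $\mathcal{L}_{\mathcal{A}}$-sentences true in $\mathcal{A}$ (with $c_a$ interpreted as $a$); an $\mathcal{A}$-algebra is an $\mathcal{L}_{\mathcal{A}}$-algebra satisfying $\mathrm{Diag}(\mathcal{A})$ (equivalently, $a\mapsto c_a$ is an embedding of $\mathcal{A}$). For a functional language $\mathcal{L}^*$ (here $\mathcal{L}^*=\mathcal{L}_{\mathcal{A}}$): a diagram-formula in a finite reduct $\mathcal{L}'$ in finite variables $X$ is a conjunction of atomic formulas and negations such that $\neg(x=y)$ is a conjunct for distinct $x,y\in X$, for each $F\in\mathcal{L}'$ and $(x_0,\dots,x_{n_F})\in X^{n_F+1}$ exactly one of $F(x_1,\dots,x_{n_F})=x_0$ and its negation is a conjunct, and for each constant $c\in\mathcal{L}'$ and $x\in X$ exactly one of $x=c$, $\neg(x=c)$ is a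 conjunct. A direct system of formulas $\Lambda=(I,\varphi_i,\gamma_{ij})$: $(I,\le)$ directed; $\varphi_i$ consistent diagram-formulas in finite reducts $\mathcal{L}_i\subseteq\mathcal{L}^*$ and finite variables $X_i$; maps $\gamma_{ij}:X_i\to X_j$ ($i\le j$) with $\gamma_{ii}=\mathrm{id}$, $\gamma_{jk}\gamma_{ij}=\gamma_{ik}$, conjuncts of $\varphi_i(\gamma_{ij}(X_i))$ are conjuncts of $\varphi_j$; every constant of $\mathcal{L}^*$ appears in a conjunct $x=c$ of some $\varphi_i$; for every $F,i,(x_1,\dots,x_{n_F})\in X_i^{n_F}$ some $j\ge i$ has a conjunct $F(\gamma_{ij}(x_1),\dots)=x_j$. The limit algebra $L(\Lambda)$ (an $\mathcal{L}^*$-algebra) has universe $\{(x,i):x\in X_i\}/\!\equiv$, $(x,i)\equiv(y,j)$ iff $\gamma_{ik}(x)=\gamma_{jk}(y)$ for some $k\ge i,j$, with constants and operations read off from the conjuncts $x=c$ and $F(\dots)=x_j$. $\varphi_i$ is realizable in $\mathcal{B}$ if it is true under some assignment $X_i\to B$. *)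

theory Defs
  imports Main
begin

record ('f,'c) lang =
  ops   :: "'f set"
  csts  :: "'c set"
  arity :: "'f \<Rightarrow> nat"

record ('f,'c,'u) alg =
  univ :: "'u set"
  fn   :: "'f \<Rightarrow> 'u list \<Rightarrow> 'u"
  cn   :: "'c \<Rightarrow> 'u"

definition is_algebra :: "('f,'c) lang \<Rightarrow> ('f,'c,'u) alg \<Rightarrow> bool" where
  "is_algebra L M \<longleftrightarrow>
     (\<forall>F\<in>ops L. \<forall>xs. set xs \<subseteq> univ M \<and> length xs = arity L F \<longrightarrow> fn M F xs \<in> univ M)
   \<and> (\<forall>c\<in>csts L. cn M c \<in> univ M)"

datatype ('f,'c) gterm = GC 'c | GA 'f "('f,'c) gterm list"

fun wf_gterm :: "('f,'c) lang \<Rightarrow> ('f,'c) gterm \<Rightarrow> bool" where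
  "wf_gterm L (GC c) = (c \<in> csts L)"
| "wf_gterm L (GA F ts) = (F \<in> ops L \<and> length ts = arity L F \<and> (\<forall>t\<in>set ts. wf_gterm L t))"

fun geval :: "('f,'c,'u) alg \<Rightarrow> ('f,'c) gterm \<Rightarrow> 'u" where
  "geval M (GC c) = cn M c"
| "geval M (GA F ts) = fn M F (map (geval M) ts)"

text \<open>The language \<open>L_A = L \<union> {c_a : a \<in> A}\<close>: constants \<open>Inl c\<close> (old) and \<open>Inr a\<close> (= c_a).\<close>
definition langA :: "('f,'c) lang \<Rightarrow> ('f,'c,'a) alg \<Rightarrow> ('f, 'c + 'a) lang" where
  "langA L A = \<lparr>ops = ops L, csts = Inl ` csts L \<union> Inr ` univ A, arity = arity L\<rparr>"

definition expandA :: "('f,'c,'a) alg \<Rightarrow> ('f, 'c + 'a, 'a) alg" where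
  "expandA A = \<lparr>univ = univ A, fn = fn A, cn = (\<lambda>d. case d of Inl c \<Rightarrow> cn A c | Inr a \<Rightarrow> a)\<rparr>"

definition sat_Diag :: "('f,'c) lang \<Rightarrow> ('f,'c,'a) alg \<Rightarrow> ('f, 'c + 'a, 'u) alg \<Rightarrow> bool" where
  "sat_Diag L A M \<longleftrightarrow>
     (\<forall>s t. wf_gterm (langA L A) s \<and> wf_gterm (langA L A) t \<longrightarrow>
        (geval (expandA A) s = geval (expandA A) t \<longrightarrow> geval M s = geval M t)
      \<and> (geval (expandA A) s \<noteq> geval (expandA A) t \<longrightarrow> geval M s \<noteq> geval M t))"

definition is_A_algebra :: "('f,'c) lang \<Rightarrow> ('f,'c,'a) alg \<Rightarrow> ('f, 'c + 'a, 'u) alg \<Rightarrow> bool" where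
  "is_A_algebra L A M \<longleftrightarrow> is_algebra (langA L A) M \<and> sat_Diag L A M"

text \<open>Flat atomic formulas: \<open>x = y\<close>, \<open>F(x_1,\<dots>,x_n) = x_0\<close>, \<open>x = c\<close>.
  A literal is a pair (polarity, atom): \<open>(True, a)\<close> is \<open>a\<close>, \<open>(False, a)\<close> is \<open>\<not> a\<close>.
  A conjunction of literals is represented by the set of its conjuncts.\<close>
datatype ('f,'c,'v) fatom = AEq 'v 'v | AOp 'f "'v list" 'v | ACst 'v 'c

type_synonym ('f,'c,'v) lit = "bool \<times> ('f,'c,'v) fatom"

fun atom_true :: "('f,'c,'u) alg \<Rightarrow> ('v \<Rightarrow> 'u) \<Rightarrow> ('f,'c,'v) fatom \<Rightarrow> bool" where
  "atom_true M h (AEq x y) = (h x = h y)"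
| "atom_true M h (AOp F xs y) = (fn M F (map h xs) = h y)"
| "atom_true M h (ACst x c) = (h x = cn M c)"

definition lit_true :: "('f,'c,'u) alg \<Rightarrow> ('v \<Rightarrow> 'u) \<Rightarrow> ('f,'c,'v) lit \<Rightarrow> bool" where
  "lit_true M h l \<longleftrightarrow> (if fst l then atom_true M h (snd l) else \<not> atom_true M h (snd l))"

definition fml_true :: "('f,'c,'u) alg \<Rightarrow> 'v set \<Rightarrow> ('v \<Rightarrow> 'u) \<Rightarrow> ('f,'c,'v) lit set \<Rightarrow> bool" where
  "fml_true M X h \<phi> \<longleftrightarrow> h ` X \<subseteq> univ M \<and> (\<forall>l\<in>\<phi>. lit_true M h l)"

definition realizable :: "('f,'c,'u) alg \<Rightarrow> 'v set \<Rightarrow> ('f,'c,'v) lit set \<Rightarrow> bool" where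
  "realizable M X \<phi> \<longleftrightarrow> (\<exists>h. fml_true M X h \<phi>)"

text \<open>Consistency: the formula has a model, i.e. is realizable in some \<open>L\<close>-algebra
  (models are taken with universe in a given type \<open>'u\<close>).\<close>
definition consistent_fml :: "'u itself \<Rightarrow> ('f,'c) lang \<Rightarrow> 'v set \<Rightarrow> ('f,'c,'v) lit set \<Rightarrow> bool" where
  "consistent_fml ty L X \<phi> \<longleftrightarrow> (\<exists>M :: ('f,'c,'u) alg. is_algebra L M \<and> realizable M X \<phi>)"

fun atom_over :: "('f,'c) lang \<Rightarrow> 'f set \<Rightarrow> 'c set \<Rightarrow> 'v set \<Rightarrow> ('f,'c,'v) fatom \<Rightarrow> bool" where
  "atom_over L Fs Cs X (AEq x y) = (x \<in> X \<and> y \<in> X)"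
| "atom_over L Fs Cs X (AOp F xs y) = (F \<in> Fs \<and> length xs = arity L F \<and> set xs \<subseteq> X \<and> y \<in> X)"
| "atom_over L Fs Cs X (ACst x c) = (c \<in> Cs \<and> x \<in> X)"

definition diagram_fml ::
  "('f,'c) lang \<Rightarrow> 'f set \<Rightarrow> 'c set \<Rightarrow> 'v set \<Rightarrow> ('f,'c,'v) lit set \<Rightarrow> bool" where
  "diagram_fml L Fs Cs X \<phi> \<longleftrightarrow>
     finite Fs \<and> finite Cs \<and> finite X \<and> Fs \<subseteq> ops L \<and> Cs \<subseteq> csts L
   \<and> (\<forall>l\<in>\<phi>. atom_over L Fs Cs X (snd l))
   \<and> (\<forall>x\<in>X. \<forall>y\<in>X. x \<noteq> y \<longrightarrow> (False, AEq x y) \<in> \<phi>)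
   \<and> (\<forall>F\<in>Fs. \<forall>xs x0. set xs \<subseteq> X \<and> length xs = arity L F \<and> x0 \<in> X \<longrightarrow>
        ((True, AOp F xs x0) \<in> \<phi> \<longleftrightarrow> (False, AOp F xs x0) \<notin> \<phi>))
   \<and> (\<forall>c\<in>Cs. \<forall>x\<in>X. ((True, ACst x c) \<in> \<phi> \<longleftrightarrow> (False, ACst x c) \<notin> \<phi>))"

fun rename_atom :: "('v \<Rightarrow> 'w) \<Rightarrow> ('f,'c,'v) fatom \<Rightarrow> ('f,'c,'w) fatom" where
  "rename_atom g (AEq x y) = AEq (g x) (g y)"
| "rename_atom g (AOp F xs y) = AOp F (map g xs) (g y)"
| "rename_atom g (ACst x c) = ACst (g x) c"

definition rename_lit :: "('v \<Rightarrow> 'w) \<Rightarrow> ('f,'c,'v) lit \<Rightarrow> ('f,'c,'w) lit" where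
  "rename_lit g l = (fst l, rename_atom g (snd l))"

record ('i,'f,'c,'v) dsys =
  idx   :: "'i set"
  leq   :: "'i \<Rightarrow> 'i \<Rightarrow> bool"
  rops  :: "'i \<Rightarrow> 'f set"
  rcsts :: "'i \<Rightarrow> 'c set"
  vars  :: "'i \<Rightarrow> 'v set"
  fml   :: "'i \<Rightarrow> ('f,'c,'v) lit set"
  gam   :: "'i \<Rightarrow> 'i \<Rightarrow> 'v \<Rightarrow> 'v"

definition directed :: "'i set \<Rightarrow> ('i \<Rightarrow> 'i \<Rightarrow> bool) \<Rightarrow> bool" where
  "directed I le \<longleftrightarrow> I \<noteq> {}
     \<and> (\<forall>i\<in>I. le i i)
     \<and> (\<forall>i\<in>I. \<forall>j\<in>I. \<forall>k\<in>I. le i j \<and> le j k \<longrightarrow> le i k)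
     \<and> (\<forall>i\<in>I. \<forall>j\<in>I. \<exists>k\<in>I. le i k \<and> le j k)"

definition direct_system :: "'u itself \<Rightarrow> ('f,'c) lang \<Rightarrow> ('i,'f,'c,'v) dsys \<Rightarrow> bool" where
  "direct_system ty L S \<longleftrightarrow>
     directed (idx S) (leq S)
   \<and> (\<forall>i\<in>idx S. diagram_fml L (rops S i) (rcsts S i) (vars S i) (fml S i)
                 \<and> consistent_fml ty L (vars S i) (fml S i))
   \<and> (\<forall>i\<in>idx S. \<forall>j\<in>idx S. leq S i j \<longrightarrow> gam S i j ` vars S i \<subseteq> vars S j)
   \<and> (\<forall>i\<in>idx S. \<forall>x\<in>vars S i. gam S i i x = x)
   \<and> (\<forall>i\<in>idx S. \<forall>j\<in>idx S. \<forall>k\<in>idx S. leq S i j \<and> leq S j k \<longrightarrow>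
        (\<forall>x\<in>vars S i. gam S j k (gam S i j x) = gam S i k x))
   \<and> (\<forall>i\<in>idx S. \<forall>j\<in>idx S. leq S i j \<longrightarrow> rename_lit (gam S i j) ` fml S i \<subseteq> fml S j)
   \<and> (\<forall>c\<in>csts L. \<exists>i\<in>idx S. \<exists>x. (True, ACst x c) \<in> fml S i)
   \<and> (\<forall>F\<in>ops L. \<forall>i\<in>idx S. \<forall>xs. set xs \<subseteq> vars S i \<and> length xs = arity L F \<longrightarrow>
        (\<exists>j\<in>idx S. leq S i j \<and> (\<exists>y. (True, AOp F (map (gam S i j) xs) y) \<in> fml S j)))"

definition lim_pairs :: "('i,'f,'c,'v) dsys \<Rightarrow> ('v \<times> 'i) set" where
  "lim_pairs S = {(x,i). i \<in> idx S \<and> x \<in> vars S i}"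

definition lim_equiv :: "('i,'f,'c,'v) dsys \<Rightarrow> ('v \<times> 'i) \<Rightarrow> ('v \<times> 'i) \<Rightarrow> bool" where
  "lim_equiv S p q \<longleftrightarrow> p \<in> lim_pairs S \<and> q \<in> lim_pairs S \<and>
     (\<exists>k\<in>idx S. leq S (snd p) k \<and> leq S (snd q) k \<and> gam S (snd p) k (fst p) = gam S (snd q) k (fst q))"

definition lim_class :: "('i,'f,'c,'v) dsys \<Rightarrow> ('v \<times> 'i) \<Rightarrow> ('v \<times> 'i) set" where
  "lim_class S p = {q. lim_equiv S p q}"

text \<open>The limit algebra \<open>L(\<Lambda>)\<close>: constants and operations read off from the conjuncts
  \<open>x = c\<close> and \<open>F(x_1,\<dots>,x_n) = x_0\<close> of the formulas of the system.\<close>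
definition limit_alg :: "('i,'f,'c,'v) dsys \<Rightarrow> ('f, 'c, ('v \<times> 'i) set) alg" where
  "limit_alg S =
    \<lparr>univ = lim_class S ` lim_pairs S,
     fn = (\<lambda>F cs. SOME C. \<exists>j\<in>idx S. \<exists>xs y. length xs = length cs
              \<and> (\<forall>k<length cs. (xs ! k, j) \<in> cs ! k)
              \<and> (True, AOp F xs y) \<in> fml S j \<and> C = lim_class S (y, j)),
     cn = (\<lambda>c. SOME C. \<exists>j\<in>idx S. \<exists>x. (True, ACst x c) \<in> fml S j \<and> C = lim_class S (x, j))\<rparr>"

end

theory Submission
  imports Defs
begin

locale LS =
  fixes ty :: "'w itself" and L :: "('f,'c) lang" and B :: "('f,'c,'u) alg"
    and S :: "('i,'f,'c,'v) dsys"
  assumes ds: "direct_system ty L S"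
    and real: "\<forall>i\<in>idx S. realizable B (vars S i) (fml S i)"
begin

lemmas D = ds[unfolded direct_system_def]
lemmas D1 = D[THEN conjunct1]
lemmas D2 = D[THEN conjunct2, THEN conjunct1]
lemmas D3 = D[THEN conjunct2, THEN conjunct2, THEN conjunct1]
lemmas D4 = D[THEN conjunct2, THEN conjunct2, THEN conjunct2, THEN conjunct1]
lemmas D5 = D[THEN conjunct2, THEN conjunct2, THEN conjunct2, THEN conjunct2, THEN conjunct1]
lemmas D6 = D[THEN conjunct2, THEN conjunct2, THEN conjunct2, THEN conjunct2, THEN conjunct2, THEN conjunct1]
lemmas D7 = D[THEN conjunct2, THEN conjunct2, THEN conjunct2, THEN conjunct2, THEN conjunct2, THEN conjunct2, THEN conjunct1]
lemmas D8 = D[THEN conjunct2, THEN conjunct2, THEN conjunct2, THEN conjunct2, THEN conjunct2, THEN conjunct2, THEN conjunct2]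

lemma dir: "directed (idx S) (leq S)" by (rule D1)
lemma I_ne: "idx S \<noteq> {}" using dir unfolding directed_def by blast
lemma le_refl: "i \<in> idx S \<Longrightarrow> leq S i i" using dir unfolding directed_def by blast
lemma le_trans: "i \<in> idx S \<Longrightarrow> j \<in> idx S \<Longrightarrow> k \<in> idx S \<Longrightarrow> leq S i j \<Longrightarrow> leq S j k \<Longrightarrow> leq S i k"
  using dir unfolding directed_def by blast
lemma ub: "i \<in> idx S \<Longrightarrow> j \<in> idx S \<Longrightarrow> \<exists>k\<in>idx S. leq S i k \<and> leq S j k"
  using dir unfolding directed_def by blast
lemma diag: "i \<in> idx S \<Longrightarrow> diagram_fml L (rops S i) (rcsts S i) (vars S i) (fml S i)"
  using D2 by blast
lemma gam_in: "i \<in> idx S \<Longrightarrow> j \<in> idx S \<Longrightarrow> leq S i j \<Longrightarrow> x \<in> vars S i \<Longrightarrow> gam S i j x \<in> vars S j"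
  using D3 by blast
lemma gam_id: "i \<in> idx S \<Longrightarrow> x \<in> vars S i \<Longrightarrow> gam S i i x = x"
  using D4 by blast
lemma gam_comp: "i \<in> idx S \<Longrightarrow> j \<in> idx S \<Longrightarrow> k \<in> idx S \<Longrightarrow> leq S i j \<Longrightarrow> leq S j k \<Longrightarrow>
   x \<in> vars S i \<Longrightarrow> gam S j k (gam S i j x) = gam S i k x"
  using D5 by blast
lemma ren: "i \<in> idx S \<Longrightarrow> j \<in> idx S \<Longrightarrow> leq S i j \<Longrightarrow> l \<in> fml S i \<Longrightarrow> rename_lit (gam S i j) l \<in> fml S j"
  using D6 by blast
lemma ren_op: "i \<in> idx S \<Longrightarrow> j \<in> idx S \<Longrightarrow> leq S i j \<Longrightarrow> (True, AOp F xs y) \<in> fml S i \<Longrightarrow>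
   (True, AOp F (map (gam S i j) xs) (gam S i j y)) \<in> fml S j"
  using ren[of i j "(True, AOp F xs y)"] by (simp add: rename_lit_def)
lemma ren_cst: "i \<in> idx S \<Longrightarrow> j \<in> idx S \<Longrightarrow> leq S i j \<Longrightarrow> (True, ACst x c) \<in> fml S i \<Longrightarrow>
   (True, ACst (gam S i j x) c) \<in> fml S j"
  using ren[of i j "(True, ACst x c)"] by (simp add: rename_lit_def)
lemma cst_ex: "c \<in> csts L \<Longrightarrow> \<exists>i\<in>idx S. \<exists>x. (True, ACst x c) \<in> fml S i"
  using D7 by blast
lemma op_ex: "F \<in> ops L \<Longrightarrow> i \<in> idx S \<Longrightarrow> set xs \<subseteq> vars S i \<Longrightarrow> length xs = arity L F \<Longrightarrow>
   \<exists>j\<in>idx S. leq S i j \<and> (\<exists>y. (True, AOp F (map (gam S i j) xs) y) \<in> fml S j)"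
  using D8 by blast
lemma realizer: "i \<in> idx S \<Longrightarrow> \<exists>h. fml_true B (vars S i) h (fml S i)"
  using real unfolding realizable_def by blast

lemma diag_atoms: "i \<in> idx S \<Longrightarrow> l \<in> fml S i \<Longrightarrow> atom_over L (rops S i) (rcsts S i) (vars S i) (snd l)"
  using diag[unfolded diagram_fml_def] by blast
lemma diag_neq: "i \<in> idx S \<Longrightarrow> x \<in> vars S i \<Longrightarrow> y \<in> vars S i \<Longrightarrow> x \<noteq> y \<Longrightarrow> (False, AEq x y) \<in> fml S i"
  using diag[unfolded diagram_fml_def] by blast

lemma op_vars: "i \<in> idx S \<Longrightarrow> (b, AOp F xs y) \<in> fml S i \<Longrightarrow> set xs \<subseteq> vars S i \<and> y \<in> vars S i"
  using diag_atoms[of i "(b, AOp F xs y)"] by auto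
lemma cst_vars: "i \<in> idx S \<Longrightarrow> (b, ACst x c) \<in> fml S i \<Longrightarrow> x \<in> vars S i"
  using diag_atoms[of i "(b, ACst x c)"] by auto

lemma inj: assumes "i \<in> idx S" "fml_true B (vars S i) h (fml S i)" "x \<in> vars S i" "y \<in> vars S i" "h x = h y"
  shows "x = y"
proof (rule ccontr)
  assume "x \<noteq> y"
  then have "(False, AEq x y) \<in> fml S i" using diag_neq assms(1,3,4) by blast
  then show False using assms(2,5) unfolding fml_true_def lit_true_def by auto
qed

lemma op_func: assumes "i \<in> idx S" "(True, AOp F xs y) \<in> fml S i" "(True, AOp F xs y') \<in> fml S i"
  shows "y = y'"
proof -
  obtain h where h: "fml_true B (vars S i) h (fml S i)" using realizer assms(1) by blast
  have a: "\<forall>l\<in>fml S i. lit_true B h l" using h unfolding fml_true_def by blast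
  have "fn B F (map h xs) = h y" "fn B F (map h xs) = h y'"
    using a[rule_format, OF assms(2)] a[rule_format, OF assms(3)] by (simp_all add: lit_true_def)
  then have "h y = h y'" by simp
  then show ?thesis using inj[OF assms(1) h] op_vars[OF assms(1) assms(2)] op_vars[OF assms(1) assms(3)] by blast
qed

lemma cst_func: assumes "i \<in> idx S" "(True, ACst x c) \<in> fml S i" "(True, ACst x' c) \<in> fml S i"
  shows "x = x'"
proof -
  obtain h where h: "fml_true B (vars S i) h (fml S i)" using realizer assms(1) by blast
  have a: "\<forall>l\<in>fml S i. lit_true B h l" using h unfolding fml_true_def by blast
  have "h x = cn B c" "h x' = cn B c"
    using a[rule_format, OF assms(2)] a[rule_format, OF assms(3)] by (simp_all add: lit_true_def)
  then have "h x = h x'" by simp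
  then show ?thesis using inj[OF assms(1) h] cst_vars[OF assms(1) assms(2)] cst_vars[OF assms(1) assms(3)] by blast
qed

lemma eq_refl: "i \<in> idx S \<Longrightarrow> x \<in> vars S i \<Longrightarrow> lim_equiv S (x,i) (x,i)"
  unfolding lim_equiv_def lim_pairs_def using le_refl by auto
lemma eq_sym: "lim_equiv S p q \<Longrightarrow> lim_equiv S q p" unfolding lim_equiv_def by auto

lemma eq_trans: assumes "lim_equiv S p q" "lim_equiv S q r" shows "lim_equiv S p r"
proof -
  obtain x i where p: "p = (x,i)" by (cases p)
  obtain y j where q: "q = (y,j)" by (cases q)
  obtain z l where r: "r = (z,l)" by (cases r)
  have mem: "i \<in> idx S" "x \<in> vars S i" "j \<in> idx S" "y \<in> vars S j" "l \<in> idx S" "z \<in> vars S l"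
    using assms unfolding p q r lim_equiv_def lim_pairs_def by auto
  obtain k1 where k1: "k1 \<in> idx S" "leq S i k1" "leq S j k1" "gam S i k1 x = gam S j k1 y"
    using assms(1) unfolding p q lim_equiv_def by auto
  obtain k2 where k2: "k2 \<in> idx S" "leq S j k2" "leq S l k2" "gam S j k2 y = gam S l k2 z"
    using assms(2) unfolding q r lim_equiv_def by auto
  obtain k where k: "k \<in> idx S" "leq S k1 k" "leq S k2 k" using ub[OF k1(1) k2(1)] by blast
  have "gam S i k x = gam S k1 k (gam S i k1 x)" using gam_comp[OF mem(1) k1(1) k(1) k1(2) k(2) mem(2)] by simp
  also have "\<dots> = gam S k1 k (gam S j k1 y)" by (simp add: k1(4))
  also have "\<dots> = gam S j k y" using gam_comp[OF mem(3) k1(1) k(1) k1(3) k(2) mem(4)] by simp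
  also have "\<dots> = gam S k2 k (gam S j k2 y)" using gam_comp[OF mem(3) k2(1) k(1) k2(2) k(3) mem(4)] by simp
  also have "\<dots> = gam S k2 k (gam S l k2 z)" by (simp add: k2(4))
  also have "\<dots> = gam S l k z" using gam_comp[OF mem(5) k2(1) k(1) k2(3) k(3) mem(6)] by simp
  finally have e: "gam S i k x = gam S l k z" .
  have "leq S i k" "leq S l k" using le_trans[OF mem(1) k1(1) k(1) k1(2) k(2)] le_trans[OF mem(5) k2(1) k(1) k2(3) k(3)] by auto
  then show ?thesis unfolding p r lim_equiv_def lim_pairs_def using mem k(1) e by auto
qed

lemma eq_gam: "i \<in> idx S \<Longrightarrow> j \<in> idx S \<Longrightarrow> leq S i j \<Longrightarrow> x \<in> vars S i \<Longrightarrow>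
  lim_equiv S (x,i) (gam S i j x, j)"
  unfolding lim_equiv_def lim_pairs_def using gam_in gam_id le_refl by auto

lemma class_eq: "lim_equiv S p q \<Longrightarrow> lim_class S p = lim_class S q"
  unfolding lim_class_def using eq_sym eq_trans by blast

lemma class_eqD: assumes "p \<in> lim_pairs S" "lim_class S p = lim_class S q" shows "lim_equiv S p q"
proof -
  obtain x i where p: "p = (x,i)" by (cases p)
  have "p \<in> lim_class S p" using assms(1) eq_refl unfolding p lim_class_def lim_pairs_def by auto
  then have "lim_equiv S q p" using assms(2) unfolding lim_class_def by auto
  then show ?thesis using eq_sym by blast
qed

lemma stable: "i \<in> idx S \<Longrightarrow> j \<in> idx S \<Longrightarrow> m \<in> idx S \<Longrightarrow> m' \<in> idx S \<Longrightarrow> leq S i m \<Longrightarrow> leq S j m \<Longrightarrow>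
  leq S m m' \<Longrightarrow> a \<in> vars S i \<Longrightarrow> b \<in> vars S j \<Longrightarrow> gam S i m a = gam S j m b \<Longrightarrow>
  gam S i m' a = gam S j m' b"
  using gam_comp[of i m m' a] gam_comp[of j m m' b] by simp

lemma list_eq_vars: "list_all2 (\<lambda>a b. lim_equiv S (a,i) (b,j)) xs ys \<Longrightarrow> set xs \<subseteq> vars S i \<and> set ys \<subseteq> vars S j"
  by (induction rule: list_all2_induct) (auto simp: lim_equiv_def lim_pairs_def)

lemma list_eq: "list_all2 (\<lambda>a b. lim_equiv S (a,i) (b,j)) xs ys \<Longrightarrow> i \<in> idx S \<Longrightarrow> j \<in> idx S \<Longrightarrow>
  \<exists>m\<in>idx S. leq S i m \<and> leq S j m \<and> map (gam S i m) xs = map (gam S j m) ys"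
proof (induction rule: list_all2_induct)
  case Nil
  then show ?case using ub by auto
next
  case (Cons a xs b ys)
  obtain k where k: "k \<in> idx S" "leq S i k" "leq S j k" "gam S i k a = gam S j k b"
    using Cons(1) unfolding lim_equiv_def by auto
  have ab: "a \<in> vars S i" "b \<in> vars S j" using Cons(1) unfolding lim_equiv_def lim_pairs_def by auto
  obtain m0 where m0: "m0 \<in> idx S" "leq S i m0" "leq S j m0" "map (gam S i m0) xs = map (gam S j m0) ys"
    using Cons by auto
  obtain m where m: "m \<in> idx S" "leq S k m" "leq S m0 m" using ub[OF k(1) m0(1)] by blast
  have lm: "leq S i m" "leq S j m" using le_trans Cons.prems k m m0 by blast+
  have h: "gam S i m a = gam S j m b" using stable[OF Cons.prems k(1) m(1) k(2,3) m(2) ab k(4)] .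
  have vs: "set xs \<subseteq> vars S i" "set ys \<subseteq> vars S j" using list_eq_vars[OF Cons(2)] by auto
  have "map (gam S i m) xs = map (gam S m0 m) (map (gam S i m0) xs)"
    using vs(1) gam_comp[OF Cons.prems(1) m0(1) m(1) m0(2) m(3)] by auto
  also have "\<dots> = map (gam S j m) ys"
    unfolding m0(4) using vs(2) gam_comp[OF Cons.prems(2) m0(1) m(1) m0(3) m(3)] by auto
  finally show ?case using h lm m(1) by auto
qed

inductive rep :: "('f,'c) gterm \<Rightarrow> 'i \<Rightarrow> 'v \<Rightarrow> bool" where
  repC: "(True, ACst x c) \<in> fml S i \<Longrightarrow> rep (GC c) i x"
| repA: "list_all2 (\<lambda>t x. rep t i x) ts xs \<Longrightarrow> (True, AOp F xs x) \<in> fml S i \<Longrightarrow> rep (GA F ts) i x"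

lemma rep_var: "rep t i x \<Longrightarrow> i \<in> idx S \<Longrightarrow> x \<in> vars S i"
  by (induction rule: rep.induct) (auto dest: op_vars cst_vars)

lemma rep_push: "rep t i x \<Longrightarrow> i \<in> idx S \<Longrightarrow> j \<in> idx S \<Longrightarrow> leq S i j \<Longrightarrow> rep t j (gam S i j x)"
proof (induction rule: rep.induct)
  case (repC x c i)
  then show ?case using ren_cst rep.repC by blast
next
  case (repA i ts xs F x)
  have "list_all2 (\<lambda>t x. rep t j x) ts (map (gam S i j) xs)"
    using repA(1) repA.prems by (auto simp: list_all2_map2 elim: list_all2_mono)
  then show ?case using rep.repA ren_op repA by blast
qed

lemma rep_push_list: "list_all2 (\<lambda>t x. rep t i x) ts xs \<Longrightarrow> i \<in> idx S \<Longrightarrow> j \<in> idx S \<Longrightarrow> leq S i j \<Longrightarrow>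
  list_all2 (\<lambda>t x. rep t j x) ts (map (gam S i j) xs)"
  by (auto simp: list_all2_map2 elim: list_all2_mono intro: rep_push)

lemma rep_vars_list: "list_all2 (\<lambda>t x. rep t i x) ts xs \<Longrightarrow> i \<in> idx S \<Longrightarrow> set xs \<subseteq> vars S i"
  by (induction rule: list_all2_induct) (auto intro: rep_var)

lemma map_l2: "list_all2 (\<lambda>t x. f x = g t) ts xs \<Longrightarrow> map f xs = map g ts"
  by (induction rule: list_all2_induct) auto

lemma rep_B: "rep t i x \<Longrightarrow> i \<in> idx S \<Longrightarrow> fml_true B (vars S i) h (fml S i) \<Longrightarrow> h x = geval B t"
proof (induction rule: rep.induct)
  case (repC x c i)
  have a: "\<forall>l\<in>fml S i. lit_true B h l" using repC unfolding fml_true_def by blast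
  show ?case using a[rule_format, OF repC(1)] by (simp add: lit_true_def)
next
  case (repA i ts xs F x)
  have "list_all2 (\<lambda>t x. h x = geval B t) ts xs" using repA(1) repA.prems
    by (auto elim: list_all2_mono)
  then have "map h xs = map (geval B) ts" by (rule map_l2)
  moreover have "fn B F (map h xs) = h x"
  proof -
    have a: "\<forall>l\<in>fml S i. lit_true B h l" using repA unfolding fml_true_def by blast
    show ?thesis using a[rule_format, OF repA(2)] by (simp add: lit_true_def)
  qed
  ultimately show ?case by simp
qed

lemma rep_lim: "rep t i x \<Longrightarrow> i \<in> idx S \<Longrightarrow> geval (limit_alg S) t = lim_class S (x,i)"
proof (induction rule: rep.induct)
  case (repC x c i)
  have xv: "x \<in> vars S i" using cst_vars repC by blast
  have "(SOME C. \<exists>j\<in>idx S. \<exists>x'. (True, ACst x' c) \<in> fml S j \<and> C = lim_class S (x', j)) = lim_class S (x,i)"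
  proof (rule some_equality)
    show "\<exists>j\<in>idx S. \<exists>x'. (True, ACst x' c) \<in> fml S j \<and> lim_class S (x, i) = lim_class S (x', j)"
      using repC by blast
  next
    fix C assume "\<exists>j\<in>idx S. \<exists>x'. (True, ACst x' c) \<in> fml S j \<and> C = lim_class S (x', j)"
    then obtain j x' where j: "j \<in> idx S" "(True, ACst x' c) \<in> fml S j" "C = lim_class S (x', j)" by blast
    obtain k where k: "k \<in> idx S" "leq S i k" "leq S j k" using ub[OF repC(2) j(1)] by blast
    have "gam S i k x = gam S j k x'"
      using cst_func[OF k(1) ren_cst[OF repC(2) k(1) k(2) repC(1)] ren_cst[OF j(1) k(1) k(3) j(2)]] .
    then have "lim_equiv S (x,i) (x',j)" unfolding lim_equiv_def lim_pairs_def
      using k xv repC(2) j(1) cst_vars[OF j(1) j(2)] by auto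
    then show "C = lim_class S (x,i)" using class_eq j(3) by metis
  qed
  then show ?case by (simp add: limit_alg_def)
next
  case (repA i ts xs F x)
  have "list_all2 (\<lambda>t z. lim_class S (z,i) = geval (limit_alg S) t) ts xs" using repA(1) repA.prems
    by (auto elim: list_all2_mono)
  then have mg: "map (\<lambda>z. lim_class S (z,i)) xs = map (geval (limit_alg S)) ts"
    by (rule map_l2)
  have xsv: "set xs \<subseteq> vars S i" "x \<in> vars S i" using op_vars repA(2) repA.prems by blast+
  define cs where "cs = map (\<lambda>z. lim_class S (z,i)) xs"
  let ?P = "\<lambda>C. \<exists>j\<in>idx S. \<exists>xs' y. length xs' = length cs
              \<and> (\<forall>k<length cs. (xs' ! k, j) \<in> cs ! k)
              \<and> (True, AOp F xs' y) \<in> fml S j \<and> C = lim_class S (y, j)"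
  have "(SOME C. ?P C) = lim_class S (x,i)"
  proof (rule some_equality)
    have "\<forall>k<length cs. (xs ! k, i) \<in> cs ! k"
    proof (intro allI impI)
      fix k assume "k < length cs"
      then have "k < length xs" "xs ! k \<in> vars S i" using xsv(1) unfolding cs_def by auto
      then show "(xs ! k, i) \<in> cs ! k" using eq_refl[OF repA.prems] unfolding cs_def lim_class_def by simp
    qed
    moreover have "length xs = length cs" unfolding cs_def by simp
    ultimately show "?P (lim_class S (x,i))" using repA(2) repA.prems by blast
  next
    fix C assume "?P C"
    then obtain j xs' y where j: "j \<in> idx S" "length xs' = length cs" "\<forall>k<length cs. (xs' ! k, j) \<in> cs ! k"
      "(True, AOp F xs' y) \<in> fml S j" "C = lim_class S (y, j)" by blast
    have "list_all2 (\<lambda>a b. lim_equiv S (a,i) (b,j)) xs xs'"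
      unfolding list_all2_conv_all_nth
    proof (intro conjI allI impI)
      show "length xs = length xs'" using j(2) unfolding cs_def by simp
      fix k assume "k < length xs"
      then show "lim_equiv S (xs ! k, i) (xs' ! k, j)" using j(3) unfolding cs_def lim_class_def by auto
    qed
    then obtain m where m: "m \<in> idx S" "leq S i m" "leq S j m" "map (gam S i m) xs = map (gam S j m) xs'"
      using list_eq repA.prems j(1) by blast
    have o1: "(True, AOp F (map (gam S i m) xs) (gam S i m x)) \<in> fml S m"
      by (rule ren_op[OF repA.prems m(1) m(2) repA(2)])
    have o2: "(True, AOp F (map (gam S i m) xs) (gam S j m y)) \<in> fml S m"
      using ren_op[OF j(1) m(1) m(3) j(4)] m(4) by simp
    have e: "gam S i m x = gam S j m y" by (rule op_func[OF m(1) o1 o2])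
    have yv: "y \<in> vars S j" using op_vars[OF j(1) j(4)] by blast
    have "lim_equiv S (x,i) (y,j)" unfolding lim_equiv_def lim_pairs_def
      using m(1,2,3) e xsv(2) repA.prems j(1) yv by auto
    then show "C = lim_class S (x,i)" using class_eq j(5) by metis
  qed
  then show ?case using mg unfolding cs_def by (simp add: limit_alg_def)
qed

lemma rep_list_ex: "\<forall>t\<in>set ts. \<exists>i\<in>idx S. \<exists>x. rep t i x \<Longrightarrow> \<exists>m\<in>idx S. \<exists>xs. list_all2 (\<lambda>t x. rep t m x) ts xs"
proof (induction ts)
  case Nil
  then show ?case using I_ne by auto
next
  case (Cons t ts)
  obtain i0 x0 where h: "i0 \<in> idx S" "rep t i0 x0" using Cons.prems by auto
  obtain m0 xs0 where t: "m0 \<in> idx S" "list_all2 (\<lambda>t x. rep t m0 x) ts xs0" using Cons by auto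
  obtain m where m: "m \<in> idx S" "leq S i0 m" "leq S m0 m" using ub[OF h(1) t(1)] by blast
  have "list_all2 (\<lambda>t x. rep t m x) (t # ts) (gam S i0 m x0 # map (gam S m0 m) xs0)"
    using rep_push[OF h(2) h(1) m(1,2)] rep_push_list[OF t(2) t(1) m(1,3)] by auto
  then show ?case using m(1) by blast
qed

lemma rep_ex: "wf_gterm L t \<Longrightarrow> \<exists>i\<in>idx S. \<exists>x. rep t i x"
proof (induction t)
  case (GC c)
  then show ?case using cst_ex rep.repC by fastforce
next
  case (GA F ts)
  then obtain m xs where m: "m \<in> idx S" "list_all2 (\<lambda>t x. rep t m x) ts xs"
    using rep_list_ex by fastforce
  have xs: "set xs \<subseteq> vars S m" "length xs = arity L F" "F \<in> ops L"
    using rep_vars_list[OF m(2) m(1)] list_all2_lengthD[OF m(2)] GA.prems by auto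
  obtain j y where j: "j \<in> idx S" "leq S m j" "(True, AOp F (map (gam S m j) xs) y) \<in> fml S j"
    using op_ex[OF xs(3) m(1) xs(1,2)] by blast
  have "rep (GA F ts) j y" using rep.repA[OF rep_push_list[OF m(2) m(1) j(1,2)] j(3)] .
  then show ?case using j(1) by blast
qed

lemma lim_sound: assumes "wf_gterm L s" "wf_gterm L t"
  shows "geval (limit_alg S) s = geval (limit_alg S) t \<longleftrightarrow> geval B s = geval B t"
proof -
  obtain i1 x1 where 1: "i1 \<in> idx S" "rep s i1 x1" using rep_ex assms(1) by blast
  obtain i2 x2 where 2: "i2 \<in> idx S" "rep t i2 x2" using rep_ex assms(2) by blast
  obtain k where k: "k \<in> idx S" "leq S i1 k" "leq S i2 k" using ub[OF 1(1) 2(1)] by blast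
  define x where "x = gam S i1 k x1"
  define y where "y = gam S i2 k x2"
  have rs: "rep s k x" "rep t k y" unfolding x_def y_def using rep_push 1 2 k by blast+
  have vs: "x \<in> vars S k" "y \<in> vars S k" using rep_var rs k(1) by blast+
  obtain h where h: "fml_true B (vars S k) h (fml S k)" using realizer k(1) by blast
  show ?thesis
  proof
    assume "geval (limit_alg S) s = geval (limit_alg S) t"
    then have "lim_class S (x,k) = lim_class S (y,k)" using rep_lim rs k(1) by metis
    then have "lim_equiv S (x,k) (y,k)" using class_eqD vs k(1) unfolding lim_pairs_def by auto
    then obtain m where m: "m \<in> idx S" "leq S k m" "gam S k m x = gam S k m y"
      unfolding lim_equiv_def by auto
    obtain h' where h': "fml_true B (vars S m) h' (fml S m)" using realizer m(1) by blast
    have "h' (gam S k m x) = geval B s" using rep_B[OF rep_push[OF rs(1) k(1) m(1,2)] m(1) h'] .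
    moreover have "h' (gam S k m y) = geval B t" using rep_B[OF rep_push[OF rs(2) k(1) m(1,2)] m(1) h'] .
    ultimately show "geval B s = geval B t" using m(3) by simp
  next
    assume "geval B s = geval B t"
    then have "h x = h y" using rep_B rs k(1) h by metis
    then have "x = y" using inj k(1) h vs by blast
    then show "geval (limit_alg S) s = geval (limit_alg S) t" using rep_lim rs k(1) by metis
  qed
qed

lemma cls_list: "set cs \<subseteq> lim_class S ` lim_pairs S \<Longrightarrow>
  \<exists>m\<in>idx S. \<exists>xs. set xs \<subseteq> vars S m \<and> cs = map (\<lambda>z. lim_class S (z,m)) xs"
proof (induction cs)
  case Nil
  then show ?case using I_ne by auto
next
  case (Cons c cs)
  have "c \<in> lim_class S ` lim_pairs S" using Cons.prems by simp
  then obtain p where p: "p \<in> lim_pairs S" "c = lim_class S p" by blast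
  obtain x0 i0 where "p = (x0,i0)" by (cases p)
  then have c: "(x0,i0) \<in> lim_pairs S" "c = lim_class S (x0,i0)" using p by auto
  have c': "i0 \<in> idx S" "x0 \<in> vars S i0" using c(1) unfolding lim_pairs_def by auto
  obtain m0 xs0 where t: "m0 \<in> idx S" "set xs0 \<subseteq> vars S m0" "cs = map (\<lambda>z. lim_class S (z,m0)) xs0"
    using Cons.IH Cons.prems by auto
  obtain m where m: "m \<in> idx S" "leq S i0 m" "leq S m0 m" using ub[OF c'(1) t(1)] by blast
  have "c = lim_class S (gam S i0 m x0, m)" using c(2) class_eq[OF eq_gam[OF c'(1) m(1) m(2) c'(2)]] by simp
  moreover have "cs = map (\<lambda>z. lim_class S (z,m)) (map (gam S m0 m) xs0)"
    unfolding t(3) map_map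
  proof (rule map_cong[OF refl])
    fix z assume "z \<in> set xs0"
    then have "z \<in> vars S m0" using t(2) by blast
    then show "lim_class S (z, m0) = ((\<lambda>z. lim_class S (z, m)) \<circ> gam S m0 m) z"
      using class_eq[OF eq_gam[OF t(1) m(1) m(3)]] by simp
  qed
  moreover have "set (gam S i0 m x0 # map (gam S m0 m) xs0) \<subseteq> vars S m"
    using gam_in[OF c'(1) m(1) m(2) c'(2)] gam_in[OF t(1) m(1) m(3)] t(2) by auto
  ultimately have "set (gam S i0 m x0 # map (gam S m0 m) xs0) \<subseteq> vars S m \<and>
     c # cs = map (\<lambda>z. lim_class S (z,m)) (gam S i0 m x0 # map (gam S m0 m) xs0)" by simp
  then show ?case using m(1) by (intro bexI[of _ m] exI[of _ "gam S i0 m x0 # map (gam S m0 m) xs0"])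
qed

lemma lim_alg: "is_algebra L (limit_alg S)"
  unfolding is_algebra_def
proof (intro conjI ballI allI impI)
  fix F cs assume F: "F \<in> ops L" and cs: "set cs \<subseteq> univ (limit_alg S) \<and> length cs = arity L F"
  obtain m xs where m: "m \<in> idx S" "set xs \<subseteq> vars S m" "cs = map (\<lambda>z. lim_class S (z,m)) xs"
  proof -
    have "set cs \<subseteq> lim_class S ` lim_pairs S" using cs by (simp add: limit_alg_def)
    then show ?thesis using cls_list that by blast
  qed
  have len: "length xs = arity L F" using cs m(3) by simp
  obtain j y where j: "j \<in> idx S" "leq S m j" "(True, AOp F (map (gam S m j) xs) y) \<in> fml S j"
    using op_ex[OF F m(1,2) len] by blast
  let ?P = "\<lambda>C. \<exists>j\<in>idx S. \<exists>xs y. length xs = length cs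
              \<and> (\<forall>k<length cs. (xs ! k, j) \<in> cs ! k)
              \<and> (True, AOp F xs y) \<in> fml S j \<and> C = lim_class S (y, j)"
  have "\<forall>k<length cs. (map (gam S m j) xs ! k, j) \<in> cs ! k"
  proof (intro allI impI)
    fix k assume "k < length cs"
    then have k: "k < length xs" "xs ! k \<in> vars S m" using m(2,3) by auto
    show "(map (gam S m j) xs ! k, j) \<in> cs ! k"
      using eq_gam[OF m(1) j(1) j(2) k(2)] k(1) m(3) unfolding lim_class_def by simp
  qed
  moreover have "length (map (gam S m j) xs) = length cs" using m(3) by simp
  ultimately have "?P (lim_class S (y,j))" using j(1,3)
    by (intro bexI[of _ j] exI[of _ "map (gam S m j) xs"] exI[of _ y]) auto
  then have "?P (SOME C. ?P C)" by (rule someI)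
  then obtain j' xs' y' where jj: "j' \<in> idx S" "(True, AOp F xs' y') \<in> fml S j'" "(SOME C. ?P C) = lim_class S (y', j')"
    by blast
  have "(y', j') \<in> lim_pairs S" using op_vars[OF jj(1,2)] jj(1) unfolding lim_pairs_def by simp
  then have "(SOME C. ?P C) \<in> lim_class S ` lim_pairs S" using jj(3) by simp
  then show "fn (limit_alg S) F cs \<in> univ (limit_alg S)" by (simp add: limit_alg_def)
next
  fix c assume c: "c \<in> csts L"
  let ?P = "\<lambda>C. \<exists>j\<in>idx S. \<exists>x. (True, ACst x c) \<in> fml S j \<and> C = lim_class S (x, j)"
  have "\<exists>C. ?P C" using cst_ex[OF c] by blast
  then have "?P (SOME C. ?P C)" by (rule someI_ex)
  then obtain j x where jj: "j \<in> idx S" "(True, ACst x c) \<in> fml S j" "(SOME C. ?P C) = lim_class S (x, j)"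
    by blast
  have "(x, j) \<in> lim_pairs S" using cst_vars[OF jj(1,2)] jj(1) unfolding lim_pairs_def by simp
  then have "(SOME C. ?P C) \<in> lim_class S ` lim_pairs S" using jj(3) by simp
  then show "cn (limit_alg S) c \<in> univ (limit_alg S)" by (simp add: limit_alg_def)
qed

end

theorem mainTheorem14:
  fixes L :: "('f,'c) lang"
    and A :: "('f,'c,'a) alg"
    and B :: "('f,'c + 'a,'u) alg"
    and S :: "('i,'f,'c + 'a,'v) dsys"
  assumes "is_algebra L A"
    and "is_A_algebra L A B"
    and "direct_system TYPE('u) (langA L A) S"
    and "\<forall>i\<in>idx S. realizable B (vars S i) (fml S i)"
  shows "is_A_algebra L A (limit_alg S)"
proof -
  interpret LS "TYPE('u)" "langA L A" B S using assms(3,4) by unfold_locales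
  have "sat_Diag L A (limit_alg S)"
    using assms(2) lim_sound unfolding is_A_algebra_def sat_Diag_def by metis
  then show ?thesis using lim_alg unfolding is_A_algebra_def by blast
qed

end
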